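(* Let $K_c=\operatorname{conv}\big(\mathbb{S}^{d-1}\cup\{\boldsymbol v_i\mid i\in I\}\big)\subset\mathbb{E}^d$ be a cap body and $i\in I$. Then the vertex $\boldsymbol v_i$ is illuminated by the direction $\boldsymbol u\in\mathbb{S}^{d-1}$ if and only if the closed spherical cap $C_i=\{\boldsymbol p\in\mathbb{S}^{d-1}\mid\langle\boldsymbol p,\boldsymbol v_i\rangle\ge 1\}$ is contained in the open hemisphere $\operatorname{Hem}_{-\boldsymbol u}$.
   Context: $\mathbb{S}^{d-1}$ is the unit sphere centred at the origin and $B^d$ the closed unit ball. A cap body is $\operatorname{conv}(\mathbb{S}^{d-1}\cup\{\boldsymbol v_i\mid i\in I\})$ where $\{\boldsymbol v_i\}$ is a countable subset of $\mathbb{E}^d\setminus B^d$ such that for distinct $i,j$ the segment $\overline{\boldsymbol v_i\boldsymbol v_j}$ intersects $B^d$; the $\boldsymbol v_i$ are its vertices. A direction $\boldsymbol u\in\mathbb{S}^{d-1}$ illuminates a boundary point $\boldsymbol p$ of $K_c$ if $\boldsymbol p+\lambda\boldsymbol u$ is in the interior of $K_c$ for some $\lambda>0$. For a unit vector $\boldsymbol w$, $\operatorname{Hem}_{\boldsymbol w}=\{\boldsymbol x\in\mathbb{S}^{d-1}\mid\langle\boldsymbol x,\boldsymbol w\rangle>0\}$. *)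

theory Defs
  imports "HOL-Analysis.Analysis"
begin

definition cap_body_vertices :: "'a::euclidean_space set \<Rightarrow> bool" where
  "cap_body_vertices V \<longleftrightarrow> countable V \<and> V \<inter> cball 0 1 = {} \<and>
     (\<forall>v\<in>V. \<forall>w\<in>V. v \<noteq> w \<longrightarrow> closed_segment v w \<inter> cball 0 1 \<noteq> {})"

definition cap_body :: "'a::euclidean_space set \<Rightarrow> 'a set" where
  "cap_body V = convex hull (sphere 0 1 \<union> V)"

definition illuminates :: "'a::euclidean_space set \<Rightarrow> 'a \<Rightarrow> 'a \<Rightarrow> bool" where
  "illuminates K u p \<longleftrightarrow> (\<exists>t>0. p + t *\<^sub>R u \<in> interior K)"

definition Hem :: "'a::euclidean_space \<Rightarrow> 'a set" where
  "Hem w = {x \<in> sphere 0 1. x \<bullet> w > 0}"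

definition cap_of :: "'a::euclidean_space \<Rightarrow> 'a set" where
  "cap_of v = {p \<in> sphere 0 1. p \<bullet> v \<ge> 1}"

end

theory Submission
  imports Defs
begin

lemma ball_sub_cap:
  fixes V :: "'a::euclidean_space set"
  shows "cball 0 1 \<subseteq> cap_body V"
proof -
  have "cball (0::'a) 1 = convex hull (frontier (cball 0 1))"
    by (rule Krein_Milman_frontier) auto
  also have "\<dots> = convex hull (sphere 0 1)" by simp
  also have "\<dots> \<subseteq> cap_body V" unfolding cap_body_def by (rule hull_mono) auto
  finally show ?thesis .
qed

lemma ray_hits:
  fixes v u :: "'a::euclidean_space"
  assumes u: "norm u = 1" and nv: "norm v > 1"
    and H: "\<And>p. norm p = 1 \<Longrightarrow> p \<bullet> v \<ge> 1 \<Longrightarrow> p \<bullet> u < 0"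
  shows "\<exists>s>0. norm (v + s *\<^sub>R u) < 1"
proof (rule ccontr)
  assume C: "\<not> ?thesis"
  have uu: "u \<bullet> u = 1" using u by (simp add: dot_square_norm)
  show False
  proof (cases "v \<bullet> u \<ge> 0")
    case True
    define p where "p = (1 / norm v) *\<^sub>R v"
    have "v \<noteq> 0" using nv by auto
    then have "norm p = 1" by (simp add: p_def)
    moreover have "p \<bullet> v = norm v" using nv
      by (simp add: p_def dot_square_norm power2_eq_square)
    moreover have "p \<bullet> u \<ge> 0" using True nv by (simp add: p_def)
    ultimately show False using H[of p] nv by (smt (verit))
  next
    case False
    define s where "s = - (v \<bullet> u)"
    define m where "m = v + s *\<^sub>R u"
    have s: "s > 0" using False s_def by simp
    have nm: "norm m \<ge> 1" using C s m_def by force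
    have mu: "m \<bullet> u = 0" by (simp add: m_def s_def inner_diff_left uu)
    have mv: "m \<bullet> v = m \<bullet> m"
    proof -
      have "m \<bullet> m = m \<bullet> v + s * (m \<bullet> u)" by (simp add: m_def inner_add_right)
      then show ?thesis using mu by simp
    qed
    define p where "p = (1 / norm m) *\<^sub>R m"
    have "m \<noteq> 0" using nm by auto
    then have "norm p = 1" by (simp add: p_def)
    moreover have "p \<bullet> v = norm m" using nm mv
      by (simp add: p_def dot_square_norm power2_eq_square)
    moreover have "p \<bullet> u = 0" using mu by (simp add: p_def)
    ultimately show False using H[of p] nm by fastforce
  qed
qed

theorem lemma4:
  fixes V :: "'a::euclidean_space set" and v u :: 'a
  assumes "cap_body_vertices V"
    and "v \<in> V"
    and "u \<in> sphere 0 1"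
  shows "illuminates (cap_body V) u v \<longleftrightarrow> cap_of v \<subseteq> Hem (- u)"
proof
  have nv: "norm v > 1" using assms(1,2) unfolding cap_body_vertices_def by auto
  assume "illuminates (cap_body V) u v"
  then obtain t where t: "t > 0" "v + t *\<^sub>R u \<in> interior (cap_body V)"
    unfolding illuminates_def by auto
  then obtain e where e: "e > 0" "ball (v + t *\<^sub>R u) e \<subseteq> cap_body V"
    using mem_interior by blast
  show "cap_of v \<subseteq> Hem (- u)"
  proof
    fix p assume "p \<in> cap_of v"
    then have p: "norm p = 1" "p \<bullet> v \<ge> 1" unfolding cap_of_def by auto
    define Hs where "Hs = {y. p \<bullet> y \<le> p \<bullet> v}"
    have "convex Hs" unfolding Hs_def by (rule convex_halfspace_le)
    moreover have "sphere 0 1 \<subseteq> Hs"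
    proof
      fix y :: 'a assume "y \<in> sphere 0 1"
      then have "norm y = 1" by simp
      then have "p \<bullet> y \<le> 1" using Cauchy_Schwarz_ineq2[of p y] p by simp
      then show "y \<in> Hs" using p unfolding Hs_def by simp
    qed
    moreover have "V \<subseteq> Hs"
    proof
      fix w assume w: "w \<in> V"
      show "w \<in> Hs"
      proof (rule ccontr)
        assume "w \<notin> Hs"
        then have gt: "p \<bullet> w > p \<bullet> v" unfolding Hs_def by simp
        then have "w \<noteq> v" by auto
        then obtain y where y: "y \<in> closed_segment v w" "norm y \<le> 1"
          using assms(1,2) w unfolding cap_body_vertices_def by fastforce
        then obtain a where a: "0 \<le> a" "a \<le> 1" "y = (1 - a) *\<^sub>R v + a *\<^sub>R w"
          unfolding closed_segment_def by auto
        have "p \<bullet> y \<le> 1" using Cauchy_Schwarz_ineq2[of p y] p y by simp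
        moreover have "p \<bullet> y = (1 - a) * (p \<bullet> v) + a * (p \<bullet> w)"
          using a by (simp add: inner_add_right)
        ultimately have "a * (p \<bullet> w - p \<bullet> v) \<le> 0" using p
          by (simp add: algebra_simps)
        then have "a = 0" using gt a by (simp add: mult_le_0_iff)
        then have "y = v" using a by simp
        then show False using y nv by simp
      qed
    qed
    ultimately have "cap_body V \<subseteq> Hs" unfolding cap_body_def
      by (simp add: hull_minimal)
    moreover have "v + t *\<^sub>R u + (e/2) *\<^sub>R p \<in> cap_body V"
      using e p by (intro subsetD[OF e(2)]) (simp add: dist_norm)
    ultimately have "p \<bullet> (v + t *\<^sub>R u + (e/2) *\<^sub>R p) \<le> p \<bullet> v" unfolding Hs_def by auto
    moreover have "p \<bullet> p = 1" using p by (simp add: dot_square_norm)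
    ultimately have "t * (p \<bullet> u) + e/2 \<le> 0" by (simp add: inner_add_right)
    then have "t * (p \<bullet> u) < 0" using e by linarith
    then have "p \<bullet> u < 0" using t by (simp add: mult_less_0_iff)
    then show "p \<in> Hem (- u)" using p unfolding Hem_def by simp
  qed
next
  have nv: "norm v > 1" using assms(1,2) unfolding cap_body_vertices_def by auto
  have u: "norm u = 1" using assms(3) by simp
  assume A: "cap_of v \<subseteq> Hem (- u)"
  have "\<And>p. norm p = 1 \<Longrightarrow> p \<bullet> v \<ge> 1 \<Longrightarrow> p \<bullet> u < 0"
  proof -
    fix p :: 'a assume "norm p = 1" "p \<bullet> v \<ge> 1"
    then have "p \<in> cap_of v" unfolding cap_of_def by simp
    then have "p \<in> Hem (- u)" using A by auto
    then show "p \<bullet> u < 0" unfolding Hem_def by simp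
  qed
  then obtain s where s: "s > 0" "norm (v + s *\<^sub>R u) < 1"
    using ray_hits[OF u nv] by blast
  define q where "q = v + s *\<^sub>R u"
  have "ball q (1 - norm q) \<subseteq> cap_body V"
  proof
    fix z assume "z \<in> ball q (1 - norm q)"
    then have "norm z \<le> 1" using norm_triangle_ineq2[of z q]
      by (simp add: dist_norm norm_minus_commute)
    then show "z \<in> cap_body V" using ball_sub_cap[of V] by auto
  qed
  then have qi: "q \<in> interior (cap_body V)"
    using s q_def by (auto simp: mem_interior intro!: exI[of _ "1 - norm q"])
  have vK: "v \<in> cap_body V" using assms(2) unfolding cap_body_def
    by (simp add: hull_inc)
  have cK: "convex (cap_body V)" unfolding cap_body_def by simp
  have "v - (1/2) *\<^sub>R (v - q) \<in> interior (cap_body V)"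
    by (rule mem_interior_convex_shrink[OF cK qi vK]) auto
  moreover have "v - (1/2) *\<^sub>R (v - q) = v + (s/2) *\<^sub>R u"
    by (simp add: q_def algebra_simps)
  ultimately show "illuminates (cap_body V) u v" unfolding illuminates_def
    using s by (intro exI[of _ "s/2"]) auto
qed

end
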